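(* For any deterministic automata $G=(X,\Sigma,\longrightarrow,X_0)$ and $R=(Z,\Sigma,\longrightarrow,Z_0)$, there exists a $\Sigma_{uc}$-admissible supervisor $S$ with $S\|G\sqsubseteq_{cc}R$ if and only if $G\sqsubseteq_{ucr}R$.
   Context: An automaton is a 4-tuple $A=(Q,\Sigma,\longrightarrow,Q_0)$ with state set $Q$, finite event set $\Sigma$, ${\longrightarrow}\subseteq Q\times\Sigma\times Q$ and $\emptyset\neq Q_0\subseteq Q$; write $q\xrightarrow{\sigma}q'$ for $(q,\sigma,q')\in{\longrightarrow}$, $q\xrightarrow{\sigma}$ if some such $q'$ exists, extended to strings. It is deterministic if $|Q_0|=1$ and each state has at most one $\sigma$-successor for each $\sigma$. A state is reachable if reached from an initial state by some string. Events are partitioned into uncontrollable $\Sigma_{uc}$ and controllable $\Sigma_c$; $\Sigma_r\subseteq\Sigma$ is a fixed set of required events. For a supervisor (automaton) $S=(Y,\Sigma,\longrightarrow,Y_0)$, $S\|G=(Y\times X,\Sigma,\longrightarrow,Y_0\times X_0)$ with $(y,x)\xrightarrow{\sigma}(y',x')$ iff $y\xrightarrow{\sigma}y'$ and $x\xrightarrow{\sigma}x'$; $S$ is $\Sigma_{uc}$-admissible w.r.t. $G$ if for every reachable $(y,x)$ of $S\|G$ and $\sigma\in\Sigma_{uc}$, $x\xrightarrow{\sigma}$ implies $(y,x)\xrightarrow{\sigma}$. For automata $A_1,A_2$ with state sets $Q_1,Q_2$, initial sets $Q_{01},Q_{02}$, and $\Phi\subseteq Q_1\times Q_2$, consider: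 (initial state) every $q_0\in Q_{01}$ has $p_0\in Q_{02}$ with $(q_0,p_0)\in\Phi$; ($\Sigma'$-forward) for $(q,p)\in\Phi$, $\sigma\in\Sigma'$, $q\xrightarrow{\sigma}q'$ there is $p'$ with $p\xrightarrow{\sigma}p'$, $(q',p')\in\Phi$; ($\Sigma_r$-backward) for $(q,p)\in\Phi$, $\sigma\in\Sigma_r$, $p\xrightarrow{\sigma}p'$ there is $q'$ with $q\xrightarrow{\sigma}q'$, $(q',p')\in\Phi$. $\Phi$ is a cc-simulation if it satisfies (initial state), ($\Sigma$-forward) and ($\Sigma_r$-backward), and a $\Sigma_{ucr}$-simulation if it satisfies (initial state), ($\Sigma_{uc}$-forward) and ($\Sigma_r$-backward). $A_1\sqsubseteq_{cc}A_2$ (resp. $A_1\sqsubseteq_{ucr}A_2$) means such a relation exists. *)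

theory Defs
  imports Main
begin

text \<open>An automaton A = (Q, Ev, trans, Q0) over a fixed event set Ev
  (the event set is passed separately as a parameter).\<close>
record ('q, 'e) automaton =
  states :: "'q set"
  trans  :: "('q \<times> 'e \<times> 'q) set"
  init   :: "'q set"

definition is_automaton :: "'e set \<Rightarrow> ('q, 'e) automaton \<Rightarrow> bool" where
  "is_automaton Ev A \<longleftrightarrow>
     trans A \<subseteq> states A \<times> Ev \<times> states A \<and>
     init A \<subseteq> states A \<and> init A \<noteq> {}"

definition deterministic :: "('q, 'e) automaton \<Rightarrow> bool" where
  "deterministic A \<longleftrightarrow>
     card (init A) = 1 \<and>
     (\<forall>q \<sigma> q1 q2. (q, \<sigma>, q1) \<in> trans A \<longrightarrow> (q, \<sigma>, q2) \<in> trans A \<longrightarrow> q1 = q2)"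

inductive steps :: "('q, 'e) automaton \<Rightarrow> 'q \<Rightarrow> 'e list \<Rightarrow> 'q \<Rightarrow> bool" for A where
  steps_Nil: "steps A q [] q"
| steps_Cons: "(q, \<sigma>, q') \<in> trans A \<Longrightarrow> steps A q' s q'' \<Longrightarrow> steps A q (\<sigma> # s) q''"

definition reachable :: "('q, 'e) automaton \<Rightarrow> 'q \<Rightarrow> bool" where
  "reachable A q \<longleftrightarrow> (\<exists>q0 s. q0 \<in> init A \<and> steps A q0 s q)"

definition enabled :: "('q, 'e) automaton \<Rightarrow> 'q \<Rightarrow> 'e \<Rightarrow> bool" where
  "enabled A q \<sigma> \<longleftrightarrow> (\<exists>q'. (q, \<sigma>, q') \<in> trans A)"

definition sync :: "('y, 'e) automaton \<Rightarrow> ('x, 'e) automaton \<Rightarrow> ('y \<times> 'x, 'e) automaton" where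
  "sync S G = \<lparr> states = states S \<times> states G,
      trans = {((y, x), \<sigma>, (y', x')) | y x \<sigma> y' x'.
                 (y, \<sigma>, y') \<in> trans S \<and> (x, \<sigma>, x') \<in> trans G},
      init = init S \<times> init G \<rparr>"

definition admissible :: "'e set \<Rightarrow> ('y, 'e) automaton \<Rightarrow> ('x, 'e) automaton \<Rightarrow> bool" where
  "admissible Euc S G \<longleftrightarrow>
     (\<forall>y x \<sigma>. reachable (sync S G) (y, x) \<longrightarrow> \<sigma> \<in> Euc \<longrightarrow>
        enabled G x \<sigma> \<longrightarrow> enabled (sync S G) (y, x) \<sigma>)"

definition sim_rel :: "'e set \<Rightarrow> 'e set \<Rightarrow> ('p, 'e) automaton \<Rightarrow> ('q, 'e) automaton
                        \<Rightarrow> ('p \<times> 'q) set \<Rightarrow> bool" where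
  "sim_rel EvF Er A1 A2 Phi \<longleftrightarrow>
     Phi \<subseteq> states A1 \<times> states A2 \<and>
     (\<forall>q0 \<in> init A1. \<exists>p0 \<in> init A2. (q0, p0) \<in> Phi) \<and>
     (\<forall>q p \<sigma> q'. (q, p) \<in> Phi \<longrightarrow> \<sigma> \<in> EvF \<longrightarrow> (q, \<sigma>, q') \<in> trans A1 \<longrightarrow>
        (\<exists>p'. (p, \<sigma>, p') \<in> trans A2 \<and> (q', p') \<in> Phi)) \<and>
     (\<forall>q p \<sigma> p'. (q, p) \<in> Phi \<longrightarrow> \<sigma> \<in> Er \<longrightarrow> (p, \<sigma>, p') \<in> trans A2 \<longrightarrow>
        (\<exists>q'. (q, \<sigma>, q') \<in> trans A1 \<and> (q', p') \<in> Phi))"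

definition cc_sim :: "'e set \<Rightarrow> 'e set \<Rightarrow> ('p, 'e) automaton \<Rightarrow> ('q, 'e) automaton \<Rightarrow> bool" where
  "cc_sim Ev Er A1 A2 \<longleftrightarrow> (\<exists>Phi. sim_rel Ev Er A1 A2 Phi)"

definition ucr_sim :: "'e set \<Rightarrow> 'e set \<Rightarrow> ('p, 'e) automaton \<Rightarrow> ('q, 'e) automaton \<Rightarrow> bool" where
  "ucr_sim Euc Er A1 A2 \<longleftrightarrow> (\<exists>Phi. sim_rel Euc Er A1 A2 Phi)"

end

theory Submission
  imports Defs
begin

lemma det_init:
  assumes "deterministic A" obtains a where "init A = {a}"
  using assms unfolding deterministic_def by (auto simp: card_1_singleton_iff)

lemma det_trans:
  assumes "deterministic A" "(q, s, q1) \<in> trans A" "(q, s, q2) \<in> trans A" shows "q1 = q2"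
  using assms unfolding deterministic_def by blast

lemma steps_snoc:
  "steps A q s q' \<Longrightarrow> (q', \<sigma>, q'') \<in> trans A \<Longrightarrow> steps A q (s @ [\<sigma>]) q''"
  by (induction rule: steps.induct) (auto intro: steps.intros)

lemma reach_step:
  "reachable A q \<Longrightarrow> (q, \<sigma>, q') \<in> trans A \<Longrightarrow> reachable A q'"
  unfolding reachable_def using steps_snoc by metis

lemma sim_relD:
  assumes "sim_rel EvF Er A1 A2 Phi"
  shows "Phi \<subseteq> states A1 \<times> states A2"
    "\<And>q0. q0 \<in> init A1 \<Longrightarrow> \<exists>p0 \<in> init A2. (q0, p0) \<in> Phi"
    "\<And>q p \<sigma> q'. (q, p) \<in> Phi \<Longrightarrow> \<sigma> \<in> EvF \<Longrightarrow> (q, \<sigma>, q') \<in> trans A1 \<Longrightarrow>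
        (\<exists>p'. (p, \<sigma>, p') \<in> trans A2 \<and> (q', p') \<in> Phi)"
    "\<And>q p \<sigma> p'. (q, p) \<in> Phi \<Longrightarrow> \<sigma> \<in> Er \<Longrightarrow> (p, \<sigma>, p') \<in> trans A2 \<Longrightarrow>
        (\<exists>q'. (q, \<sigma>, q') \<in> trans A1 \<and> (q', p') \<in> Phi)"
  using assms unfolding sim_rel_def by blast+

lemma dir1:
  fixes S :: "('y, 'e) automaton" and G :: "('x, 'e) automaton" and R :: "('z, 'e) automaton"
  assumes "is_automaton Ev S" "admissible Euc S G" "cc_sim Ev Er (sync S G) R"
    "deterministic G" "Euc \<subseteq> Ev"
  shows "ucr_sim Euc Er G R"
proof -
  obtain Phi where P: "sim_rel Ev Er (sync S G) R Phi" using assms(3) cc_sim_def by blast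
  define Psi where "Psi = {(x, z) | y x z. ((y,x),z) \<in> Phi \<and> reachable (sync S G) (y,x)}"
  have "sim_rel Euc Er G R Psi"
    unfolding sim_rel_def
  proof (intro conjI allI impI ballI)
    show "Psi \<subseteq> states G \<times> states R" using sim_relD(1)[OF P] unfolding Psi_def sync_def by auto
  next
    fix q0 assume q0: "q0 \<in> init G"
    obtain y0 where y0: "y0 \<in> init S" using assms(1) unfolding is_automaton_def by blast
    have i: "(y0, q0) \<in> init (sync S G)" using y0 q0 by (simp add: sync_def)
    then obtain p0 where "p0 \<in> init R" "((y0,q0),p0) \<in> Phi" using sim_relD(2)[OF P] by blast
    moreover have "reachable (sync S G) (y0,q0)" unfolding reachable_def using i steps.steps_Nil[of "sync S G" "(y0,q0)"] by blast
    ultimately show "\<exists>p0\<in>init R. (q0, p0) \<in> Psi" unfolding Psi_def by blast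
  next
    fix q p \<sigma> q' assume a: "(q, p) \<in> Psi" "\<sigma> \<in> Euc" "(q, \<sigma>, q') \<in> trans G"
    then obtain y where y: "((y,q),p) \<in> Phi" "reachable (sync S G) (y,q)" unfolding Psi_def by blast
    have "enabled G q \<sigma>" unfolding enabled_def using a(3) by blast
    hence "enabled (sync S G) (y,q) \<sigma>" using assms(2) y(2) a(2) unfolding admissible_def by blast
    then obtain y' x'' where t: "(y,\<sigma>,y') \<in> trans S" "(q,\<sigma>,x'') \<in> trans G"
      unfolding enabled_def sync_def by auto
    have "x'' = q'" using det_trans[OF assms(4) t(2) a(3)] .
    hence t2: "((y,q),\<sigma>,(y',q')) \<in> trans (sync S G)" using t by (simp add: sync_def)
    have "\<sigma> \<in> Ev" using a(2) assms(5) by blast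
    then obtain p' where p': "(p,\<sigma>,p') \<in> trans R" "((y',q'),p') \<in> Phi"
      using sim_relD(3)[OF P y(1) _ t2] by blast
    have "reachable (sync S G) (y',q')" using y(2) t2 by (rule reach_step)
    then show "\<exists>p'. (p, \<sigma>, p') \<in> trans R \<and> (q', p') \<in> Psi" using p' unfolding Psi_def by blast
  next
    fix q p \<sigma> p' assume a: "(q, p) \<in> Psi" "\<sigma> \<in> Er" "(p, \<sigma>, p') \<in> trans R"
    then obtain y where y: "((y,q),p) \<in> Phi" "reachable (sync S G) (y,q)" unfolding Psi_def by blast
    then obtain w where w: "((y,q),\<sigma>,w) \<in> trans (sync S G)" "(w,p') \<in> Phi"
      using sim_relD(4)[OF P y(1) a(2,3)] by blast
    obtain y' q' where wq: "w = (y',q')" by (cases w)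
    have w1: "((y,q),\<sigma>,(y',q')) \<in> trans (sync S G)" using w(1) wq by simp
    hence tq: "(q,\<sigma>,q') \<in> trans G" by (simp add: sync_def)
    have r: "reachable (sync S G) (y',q')" using reach_step[OF y(2) w1] .
    have "((y',q'),p') \<in> Phi" using w(2) wq by simp
    hence "(q',p') \<in> Psi" using r unfolding Psi_def by blast
    then show "\<exists>q'. (q, \<sigma>, q') \<in> trans G \<and> (q', p') \<in> Psi" using tq by blast
  qed
  then show ?thesis unfolding ucr_sim_def by blast
qed

lemma dir2:
  fixes G :: "('x, 'e) automaton" and R :: "('z, 'e) automaton"
  assumes "is_automaton Ev G" "deterministic G" "Er \<subseteq> Ev" "ucr_sim Euc Er G R"
  shows "\<exists>S :: ('x \<times> 'z, 'e) automaton. is_automaton Ev S \<and> admissible Euc S G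
                 \<and> cc_sim Ev Er (sync S G) R"
proof -
  obtain Psi where P: "sim_rel Euc Er G R Psi" using assms(4) ucr_sim_def by blast
  obtain x0 where x0: "init G = {x0}" using det_init[OF assms(2)] by blast
  obtain z0 where z0: "z0 \<in> init R" "(x0,z0) \<in> Psi" using P x0 unfolding sim_rel_def by blast
  define S :: "('x \<times> 'z, 'e) automaton" where "S = \<lparr> states = Psi,
     trans = {((x,z),\<sigma>,(x',z')) | x z \<sigma> x' z'. (x,z) \<in> Psi \<and> (x',z') \<in> Psi \<and> \<sigma> \<in> Ev
         \<and> (x,\<sigma>,x') \<in> trans G \<and> (z,\<sigma>,z') \<in> trans R},
     init = {(x,z) | x z. x \<in> init G \<and> z \<in> init R \<and> (x,z) \<in> Psi} \<rparr>"
  have SA: "is_automaton Ev S" unfolding is_automaton_def S_def using z0 x0 by auto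
  have inv: "fst (fst q') = snd q' \<and> fst q' \<in> Psi"
    if "steps (sync S G) q s q'" "fst q \<in> Psi" "fst (fst q) = snd q" for q s q'
    using that
  proof (induction rule: steps.induct)
    case (steps_Nil q) then show ?case by simp
  next
    case (steps_Cons q \<sigma> q' s q'')
    obtain a b c where q: "q = ((a,b),c)" by (cases q) auto
    obtain a' b' c' where q': "q' = ((a',b'),c')" by (cases q') auto
    have t: "(a,\<sigma>,a') \<in> trans G" "(c,\<sigma>,c') \<in> trans G" "(a',b') \<in> Psi"
      using steps_Cons.hyps(1) q q' by (auto simp: sync_def S_def)
    have "a = c" using steps_Cons.prems q by simp
    hence "a' = c'" using t det_trans[OF assms(2)] by blast
    then show ?case using steps_Cons.IH q' t by simp
  qed
  have reach: "fst p = x \<and> p \<in> Psi" if rp: "reachable (sync S G) (p, x)" for p x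
  proof -
    obtain q0 s where "q0 \<in> init (sync S G)" "steps (sync S G) q0 s (p,x)"
      using rp unfolding reachable_def by blast
    moreover from this(1) have "fst (fst q0) = snd q0" "fst q0 \<in> Psi"
      using x0 by (auto simp: sync_def S_def)
    ultimately show ?thesis using inv by fastforce
  qed
  have adm: "admissible Euc S G" unfolding admissible_def
  proof (intro allI impI)
    fix y x \<sigma> assume a: "reachable (sync S G) (y, x)" "\<sigma> \<in> Euc" "enabled G x \<sigma>"
    obtain z where y: "y = (x,z)" "(x,z) \<in> Psi" using reach[OF a(1)] by (cases y) auto
    obtain x' where x': "(x,\<sigma>,x') \<in> trans G" using a(3) unfolding enabled_def by blast
    then obtain z' where z': "(z,\<sigma>,z') \<in> trans R" "(x',z') \<in> Psi"
      using P y a(2) unfolding sim_rel_def by blast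
    have "\<sigma> \<in> Ev" using x' assms(1) unfolding is_automaton_def by blast
    hence "((x,z),\<sigma>,(x',z')) \<in> trans S" using y x' z' by (auto simp: S_def)
    then show "enabled (sync S G) (y, x) \<sigma>" using y x' unfolding enabled_def sync_def by auto
  qed
  define Phi where "Phi = {(((x,z),x),z) | x z. (x,z) \<in> Psi}"
  have "sim_rel Ev Er (sync S G) R Phi"
    unfolding sim_rel_def
  proof (intro conjI allI impI ballI)
    show "Phi \<subseteq> states (sync S G) \<times> states R" using P unfolding Phi_def sim_rel_def sync_def S_def by auto
  next
    fix q0 assume "q0 \<in> init (sync S G)"
    then obtain z where "q0 = ((x0,z),x0)" "z \<in> init R" "(x0,z) \<in> Psi" using x0 by (auto simp: sync_def S_def)
    then show "\<exists>p0\<in>init R. (q0, p0) \<in> Phi" unfolding Phi_def by blast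
  next
    fix q p \<sigma> q' assume a: "(q, p) \<in> Phi" "\<sigma> \<in> Ev" "(q, \<sigma>, q') \<in> trans (sync S G)"
    then obtain x where q: "q = ((x,p),x)" unfolding Phi_def by blast
    obtain a' b' c' where q': "q' = ((a',b'),c')" by (cases q') auto
    have t: "(x,\<sigma>,a') \<in> trans G" "(x,\<sigma>,c') \<in> trans G" "(a',b') \<in> Psi" "(p,\<sigma>,b') \<in> trans R"
      using a(3) q q' by (auto simp: sync_def S_def)
    hence "a' = c'" using det_trans[OF assms(2)] by blast
    then show "\<exists>p'. (p, \<sigma>, p') \<in> trans R \<and> (q', p') \<in> Phi" using t q' unfolding Phi_def by blast
  next
    fix q p \<sigma> p' assume a: "(q, p) \<in> Phi" "\<sigma> \<in> Er" "(p, \<sigma>, p') \<in> trans R"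
    then obtain x where q: "q = ((x,p),x)" "(x,p) \<in> Psi" unfolding Phi_def by blast
    then obtain x' where x': "(x,\<sigma>,x') \<in> trans G" "(x',p') \<in> Psi"
      using P a unfolding sim_rel_def by blast
    have "\<sigma> \<in> Ev" using a(2) assms(3) by blast
    hence "((x,p),\<sigma>,(x',p')) \<in> trans S" using q x' a(3) by (auto simp: S_def)
    hence "(q,\<sigma>,((x',p'),x')) \<in> trans (sync S G)" using q x' by (auto simp: sync_def)
    then show "\<exists>q'. (q, \<sigma>, q') \<in> trans (sync S G) \<and> (q', p') \<in> Phi" using x' unfolding Phi_def by blast
  qed
  then show ?thesis using SA adm unfolding cc_sim_def by blast
qed

theorem corollary1:
  fixes Ev Euc Er :: "'e set"
    and G :: "('x, 'e) automaton" and R :: "('z, 'e) automaton"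
  assumes "finite Ev" and "Euc \<subseteq> Ev" and "Er \<subseteq> Ev"
    and "is_automaton Ev G" and "deterministic G"
    and "is_automaton Ev R" and "deterministic R"
  shows "((\<forall>S :: ('y, 'e) automaton. is_automaton Ev S \<and> admissible Euc S G
              \<and> cc_sim Ev Er (sync S G) R \<longrightarrow> ucr_sim Euc Er G R)
         \<and> (ucr_sim Euc Er G R \<longrightarrow>
              (\<exists>S :: ('x \<times> 'z, 'e) automaton. is_automaton Ev S \<and> admissible Euc S G
                 \<and> cc_sim Ev Er (sync S G) R)))"
proof (intro conjI allI impI)
  fix S :: "('y, 'e) automaton"
  assume "is_automaton Ev S \<and> admissible Euc S G \<and> cc_sim Ev Er (sync S G) R"
  then show "ucr_sim Euc Er G R"
    using dir1[OF _ _ _ assms(5) assms(2)] by blast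
next
  assume "ucr_sim Euc Er G R"
  then show "\<exists>S :: ('x \<times> 'z, 'e) automaton. is_automaton Ev S \<and> admissible Euc S G
                 \<and> cc_sim Ev Er (sync S G) R" by (rule dir2[OF assms(4) assms(5) assms(3)])
qed

end
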